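(* For $K>K^*:=\frac{b\sigma_1}{b-\mu_0}$ let $G_3(K)=(S(K),I_1(K),0,0,R(K))$ be the unique equilibrium of the system below with $S,I_1,R>0$, and let $R^{**}=\frac{K}{b}(b-\mu_4')$. Then, as $K\to\infty$, $$R(K)=R^{**}+O(1),\qquad I_1(K)=\frac{\mu_4'-\mu_0}{\alpha_1}+O\!\left(\frac1K\right),\qquad S(K)=\frac{\mu_1-\mu_4'}{\alpha_1}+O\!\left(\frac1K\right).$$ In particular $R(K)\to\infty$ as $K\to\infty$, i.e. the recovered component of $G_3$ is not bounded uniformly in $K$.
   Context: Consider, for $t\ge0$, the system $S'=\big(b(1-\tfrac{N}{K})-\alpha_1I_1-\alpha_2I_2-(\beta_1+\beta_2+\alpha_3)I_{12}-\mu_0\big)S$, $I_1'=\big(b(1-\tfrac{N}{K})+\alpha_1S-\eta_1I_{12}-\gamma_1I_2-\mu_1\big)I_1+\beta_1SI_{12}$, $I_2'=\big(b(1-\tfrac{N}{K})+\alpha_2S-\eta_2I_{12}-\gamma_2I_1-\mu_2\big)I_2+\beta_2SI_{12}$, $I_{12}'=\big(b(1-\tfrac{N}{K})+\alpha_3S+\eta_1I_1+\eta_2I_2-\mu_3\big)I_{12}+(\gamma_1+\gamma_2)I_1I_2$, $R'=\big(b(1-\tfrac{N}{K})-\mu_4'\big)R+\rho_1I_1+\rho_2I_2+\rho_3I_{12}$, where $N=S+I_1+I_2+I_{12}+R$. All parameters $b,K,\alpha_i,\beta_i,\gamma_i,\eta_i,\rho_i,\mu_0,\mu_i'$ are positive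 and $\mu_i=\rho_i+\mu_i'$ for $i=1,2,3$; $K$ is regarded as a varying parameter, the others fixed. Standing assumptions: $b>\mu_0$, $b>\mu_i$ ($i=1,2,3$), $b>\mu_4'$, and $\mu_0<\mu_4'<\mu_j'$ for $j=1,2,3$. Set $\sigma_k=(\mu_k-\mu_0)/\alpha_k$ ($k=1,2,3$), assumed to satisfy $\sigma_1<\sigma_2<\sigma_3$, and $S^{**}=\frac{K}{b}(b-\mu_0)$. *)

theory Defs
  imports "HOL-Analysis.Analysis" "HOL-Library.Landau_Symbols"
begin

text \<open>Parameters:
 b, K; a1 a2 a3 (alpha_i); be1 be2 (beta_i); g1 g2 (gamma_i); e1 e2 (eta_i);
 r1 r2 r3 (rho_i); m0 (mu_0); m1 m2 m3 (mu_i = rho_i + mu_i'); m4' (mu_4').\<close>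

definition logistic :: "real \<Rightarrow> real \<Rightarrow> real \<Rightarrow> real" where
  "logistic b K N = b * (1 - N / K)"

definition is_equilibrium ::
  "real \<Rightarrow> real \<Rightarrow> real \<Rightarrow> real \<Rightarrow> real \<Rightarrow> real \<Rightarrow> real \<Rightarrow> real \<Rightarrow> real \<Rightarrow> real \<Rightarrow> real
   \<Rightarrow> real \<Rightarrow> real \<Rightarrow> real \<Rightarrow> real \<Rightarrow> real \<Rightarrow> real \<Rightarrow> real \<Rightarrow> real \<Rightarrow> real
   \<Rightarrow> real \<Rightarrow> real \<Rightarrow> real \<Rightarrow> real \<Rightarrow> bool" where
  "is_equilibrium b K a1 a2 a3 be1 be2 g1 g2 e1 e2 r1 r2 r3 m0 m1 m2 m3 m4'
      S I1 I2 I12 R \<longleftrightarrow>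
    (let L = logistic b K (S + I1 + I2 + I12 + R) in
      (L - a1 * I1 - a2 * I2 - (be1 + be2 + a3) * I12 - m0) * S = 0 \<and>
      (L + a1 * S - e1 * I12 - g1 * I2 - m1) * I1 + be1 * S * I12 = 0 \<and>
      (L + a2 * S - e2 * I12 - g2 * I1 - m2) * I2 + be2 * S * I12 = 0 \<and>
      (L + a3 * S + e1 * I1 + e2 * I2 - m3) * I12 + (g1 + g2) * I1 * I2 = 0 \<and>
      (L - m4') * R + r1 * I1 + r2 * I2 + r3 * I12 = 0)"

end

theory Submission
  imports Defs
begin

theorem mainTheorem10:
  fixes b a1 a2 a3 be1 be2 g1 g2 e1 e2 r1 r2 r3 m0 m1' m2' m3' m4' m1 m2 m3 :: real
    and S I1 R :: "real \<Rightarrow> real"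
  assumes pos: "b > 0" "a1 > 0" "a2 > 0" "a3 > 0" "be1 > 0" "be2 > 0" "g1 > 0" "g2 > 0"
      "e1 > 0" "e2 > 0" "r1 > 0" "r2 > 0" "r3 > 0" "m0 > 0"
      "m1' > 0" "m2' > 0" "m3' > 0" "m4' > 0"
    and mu_def: "m1 = r1 + m1'" "m2 = r2 + m2'" "m3 = r3 + m3'"
    and standing: "b > m0" "b > m1" "b > m2" "b > m3" "b > m4'"
      "m0 < m4'" "m4' < m1'" "m4' < m2'" "m4' < m3'"
    and sigma: "(m1 - m0) / a1 < (m2 - m0) / a2" "(m2 - m0) / a2 < (m3 - m0) / a3"
    and G3: "\<And>K. K > b * ((m1 - m0) / a1) / (b - m0) \<Longrightarrow>
        S K > 0 \<and> I1 K > 0 \<and> R K > 0 \<and>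
        is_equilibrium b K a1 a2 a3 be1 be2 g1 g2 e1 e2 r1 r2 r3 m0 m1 m2 m3 m4'
          (S K) (I1 K) 0 0 (R K)"
  shows "(\<lambda>K. R K - K / b * (b - m4')) \<in> O[at_top](\<lambda>_. 1) \<and>
    (\<lambda>K. I1 K - (m4' - m0) / a1) \<in> O[at_top](\<lambda>K. 1 / K) \<and>
    (\<lambda>K. S K - (m1 - m4') / a1) \<in> O[at_top](\<lambda>K. 1 / K) \<and>
    filterlim R at_top at_top"
proof -
  define c1 where "c1 = (m4' - m0) / a1"
  define s0 where "s0 = (m1 - m0) / a1"
  define q where "q = (b - m4') / b"
  define K0 where "K0 = max (max (b * ((m1 - m0) / a1) / (b - m0)) 1) (2 * (s0 + c1) / q)"
  have qpos: "q > 0" using pos standing by (simp add: q_def)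
  have c1pos: "c1 > 0" using pos standing by (simp add: c1_def)
  have s0pos: "s0 > 0" using pos standing mu_def by (simp add: s0_def)
  have key: "\<bar>I1 K - c1\<bar> \<le> (2 * r1 * c1 / (q * a1)) * (1 / K) \<and>
      \<bar>S K - (m1 - m4') / a1\<bar> \<le> (2 * r1 * c1 / (q * a1)) * (1 / K) \<and>
      \<bar>R K - K / b * (b - m4')\<bar> \<le> 2 * r1 * c1 / (q * b) + s0 + c1 \<and>
      R K \<ge> q / 2 * K" if K: "K > K0" for K
  proof -
    have Kg: "K > b * ((m1 - m0) / a1) / (b - m0)" "K > 1" "K > 2 * (s0 + c1) / q"
      using K unfolding K0_def by auto
    have Kpos: "K > 0" using Kg by simp
    from G3[OF Kg(1)] have SP: "S K > 0" and IP: "I1 K > 0" and RP: "R K > 0"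
      and eq: "is_equilibrium b K a1 a2 a3 be1 be2 g1 g2 e1 e2 r1 r2 r3 m0 m1 m2 m3 m4'
          (S K) (I1 K) 0 0 (R K)" by auto
    define L where "L = b * (1 - (S K + I1 K + R K) / K)"
    have e1: "(L - a1 * I1 K - m0) * S K = 0" and e2: "(L + a1 * S K - m1) * I1 K = 0"
      and e5: "(L - m4') * R K + r1 * I1 K = 0"
      using eq unfolding is_equilibrium_def logistic_def Let_def L_def by simp_all
    have L1: "L = m0 + a1 * I1 K" using e1 SP by simp
    have "L + a1 * S K - m1 = 0" using e2 IP by simp
    hence L2: "S K = (m1 - L) / a1" using pos by (simp add: field_simps)
    have dpos: "m4' - L > 0"
    proof (rule ccontr)
      assume "\<not> ?thesis"
      hence "(L - m4') * R K \<ge> 0" using RP by simp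
      thus False using e5 IP pos by (smt (verit) mult_pos_pos)
    qed
    define d where "d = m4' - L"
    have Rd: "R K * d = r1 * I1 K" using e5 by (simp add: d_def algebra_simps)
    have Ib: "I1 K < c1" using dpos L1 pos by (simp add: c1_def field_simps)
    have aI: "a1 * I1 K > 0" using IP pos by simp
    have "S K * a1 = m1 - L" using L2 pos by simp
    hence "S K * a1 < m1 - m0" using L1 aI by simp
    hence Sb: "S K < s0" using pos by (simp add: s0_def field_simps)
    have N: "S K + I1 K + R K = K * (1 - L / b)" using Kpos pos unfolding L_def
      by (simp add: field_simps)
    have "K * (1 - L / b) = K * q + K * d / b" using pos by (simp add: q_def d_def field_simps)
    hence RE: "R K - K / b * (b - m4') = K * d / b - S K - I1 K" using N pos
      by (simp add: q_def field_simps)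
    have h1: "q * K > 2 * (s0 + c1)" using Kg(3) qpos by (simp add: field_simps)
    have "K * d / b \<ge> 0" using dpos Kpos pos by (simp add: d_def)
    hence h2: "R K \<ge> q * K - S K - I1 K" using RE Kpos pos
      by (simp add: q_def field_simps)
    have "R K \<ge> (q * K) / 2" using h1 h2 Ib Sb by (smt (verit) field_sum_of_halves)
    hence Rlow: "R K \<ge> q / 2 * K" by simp
    have "R K * d \<le> r1 * c1" using Rd Ib pos by (smt (verit) mult_left_mono)
    hence "(q / 2 * K) * d \<le> r1 * c1"
      by (smt (verit) Rlow dpos d_def mult_right_mono)
    hence db: "d \<le> 2 * r1 * c1 / (q * K)" using qpos Kpos by (simp add: field_simps)
    have dp: "d > 0" using dpos d_def by simp
    have a: "\<bar>I1 K - c1\<bar> = d / a1" using L1 pos Ib by (simp add: c1_def d_def field_simps)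
    have b': "\<bar>S K - (m1 - m4') / a1\<bar> = d / a1" using L2 pos dp
      by (simp add: d_def field_simps)
    have dd: "d / a1 \<le> (2 * r1 * c1 / (q * a1)) * (1 / K)"
      using db pos by (simp add: field_simps)
    have "K * d / b \<le> 2 * r1 * c1 / (q * b)" using db Kpos pos qpos
      by (simp add: field_simps)
    hence "\<bar>R K - K / b * (b - m4')\<bar> \<le> 2 * r1 * c1 / (q * b) + s0 + c1"
      using RE Ib Sb SP IP dp Kpos pos by (smt (verit) divide_pos_pos mult_pos_pos)
    thus ?thesis using a b' dd Rlow by simp
  qed
  have ev: "eventually (\<lambda>K. K > K0) at_top" by (rule eventually_gt_at_top)
  have ev1: "eventually (\<lambda>K. K > (0::real)) at_top" by (rule eventually_gt_at_top)
  have A: "(\<lambda>K. R K - K / b * (b - m4')) \<in> O[at_top](\<lambda>_. 1)"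
    apply (rule bigoI[where c = "2 * r1 * c1 / (q * b) + s0 + c1"])
    using ev by eventually_elim (use key in auto)
  have B: "(\<lambda>K. I1 K - (m4' - m0) / a1) \<in> O[at_top](\<lambda>K. 1 / K)"
    apply (rule bigoI[where c = "2 * r1 * c1 / (q * a1)"])
    using eventually_conj[OF ev ev1] by eventually_elim (use key c1_def in auto)
  have C: "(\<lambda>K. S K - (m1 - m4') / a1) \<in> O[at_top](\<lambda>K. 1 / K)"
    apply (rule bigoI[where c = "2 * r1 * c1 / (q * a1)"])
    using eventually_conj[OF ev ev1] by eventually_elim (use key in auto)
  have lim: "filterlim (\<lambda>K. q / 2 * K) at_top at_top"
    using qpos by (intro filterlim_tendsto_pos_mult_at_top[OF tendsto_const _ filterlim_ident]) auto
  have D: "filterlim R at_top at_top"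
    apply (rule filterlim_at_top_mono[OF lim])
    using ev by eventually_elim (use key in auto)
  show ?thesis using A B C D by blast
qed

end
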